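(* For all integers $n$ and $\alpha$ with $n<\alpha\le 2^{n-1}+1$, there exists a minimal $n$-state nondeterministic finite automaton accepting a prefix-free language whose equivalent minimal deterministic finite automaton has exactly $\alpha$ states. The same holds with "prefix-free" replaced by "suffix-free".
   Context: NFAs have a single initial state and a transition function $\delta:Q\times\Sigma\to 2^Q$ that may map to the empty set (no sink state is needed or counted); DFAs are complete, so a sink state is counted. A minimal $n$-state NFA is an NFA with $n$ states such that no NFA with fewer states accepts the same language. With $\Sigma^+=\Sigma^*\setminus\{\lambda\}$: $L$ is prefix-free if $y\in L$ implies $yz\notin L$ for all $z\in\Sigma^+$; suffix-free if $y\in L$ implies $xy\notin L$ for all $x\in\Sigma^+$. *)

theory Defs
  imports Main
begin

record 'a nfa =
  nstates :: "nat set"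
  ninit :: nat
  ndelta :: "nat \<Rightarrow> 'a \<Rightarrow> nat set"
  nfinal :: "nat set"

record 'a dfa =
  dstates :: "nat set"
  dinit :: nat
  ddelta :: "nat \<Rightarrow> 'a \<Rightarrow> nat"
  dfinal :: "nat set"

text \<open>NFA: single initial state, transitions may be empty (no sink needed).\<close>
definition is_nfa :: "'a set \<Rightarrow> 'a nfa \<Rightarrow> bool" where
  "is_nfa Alph A \<longleftrightarrow> finite (nstates A) \<and> ninit A \<in> nstates A \<and>
     nfinal A \<subseteq> nstates A \<and>
     (\<forall>q\<in>nstates A. \<forall>a\<in>Alph. ndelta A q a \<subseteq> nstates A)"

fun nfa_reach :: "(nat \<Rightarrow> 'a \<Rightarrow> nat set) \<Rightarrow> nat set \<Rightarrow> 'a list \<Rightarrow> nat set" where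
  "nfa_reach d S [] = S"
| "nfa_reach d S (a # w) = nfa_reach d (\<Union>q\<in>S. d q a) w"

definition nfa_lang :: "'a set \<Rightarrow> 'a nfa \<Rightarrow> 'a list set" where
  "nfa_lang Alph A = {w \<in> lists Alph. nfa_reach (ndelta A) {ninit A} w \<inter> nfinal A \<noteq> {}}"

text \<open>DFA: complete (every state has a transition on every letter), so a sink counts.\<close>
definition is_dfa :: "'a set \<Rightarrow> 'a dfa \<Rightarrow> bool" where
  "is_dfa Alph D \<longleftrightarrow> finite (dstates D) \<and> dinit D \<in> dstates D \<and>
     dfinal D \<subseteq> dstates D \<and>
     (\<forall>q\<in>dstates D. \<forall>a\<in>Alph. ddelta D q a \<in> dstates D)"

definition dfa_lang :: "'a set \<Rightarrow> 'a dfa \<Rightarrow> 'a list set" where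
  "dfa_lang Alph D = {w \<in> lists Alph. foldl (ddelta D) (dinit D) w \<in> dfinal D}"

definition nfa_sc :: "'a set \<Rightarrow> 'a list set \<Rightarrow> nat" where
  "nfa_sc Alph L = (LEAST n. \<exists>A. is_nfa Alph A \<and> card (nstates A) = n \<and> nfa_lang Alph A = L)"

definition dfa_sc :: "'a set \<Rightarrow> 'a list set \<Rightarrow> nat" where
  "dfa_sc Alph L = (LEAST n. \<exists>D. is_dfa Alph D \<and> card (dstates D) = n \<and> dfa_lang Alph D = L)"

definition minimal_nfa :: "'a set \<Rightarrow> 'a nfa \<Rightarrow> bool" where
  "minimal_nfa Alph A \<longleftrightarrow> is_nfa Alph A \<and>
     (\<forall>B. is_nfa Alph B \<and> nfa_lang Alph B = nfa_lang Alph A \<longrightarrow> card (nstates A) \<le> card (nstates B))"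

definition prefix_free :: "'a list set \<Rightarrow> bool" where
  "prefix_free L \<longleftrightarrow> (\<forall>y\<in>L. \<forall>z. z \<noteq> [] \<longrightarrow> y @ z \<notin> L)"

definition suffix_free :: "'a list set \<Rightarrow> bool" where
  "suffix_free L \<longleftrightarrow> (\<forall>y\<in>L. \<forall>x. x \<noteq> [] \<longrightarrow> x @ y \<notin> L)"

end

theory Submission
  imports Defs
begin

lemma nfa_reach_append: "nfa_reach d S (u @ v) = nfa_reach d (nfa_reach d S u) v"
  by (induction u arbitrary: S) auto

lemma nfa_reach_empty[simp]: "nfa_reach d {} w = {}"
  by (induction w) auto

lemma nfa_reach_UN: "nfa_reach d S w = (\<Union>q\<in>S. nfa_reach d {q} w)"
proof (induction w arbitrary: S)
  case Nil then show ?case by simp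
next
  case (Cons a w)
  have e: "\<And>T. (\<Union>p\<in>T. nfa_reach d {p} w) = nfa_reach d T w" by (rule Cons.IH[symmetric])
  have "nfa_reach d S (a # w) = (\<Union>p\<in>(\<Union>q\<in>S. d q a). nfa_reach d {p} w)"
    by (simp only: nfa_reach.simps e)
  also have "\<dots> = (\<Union>q\<in>S. \<Union>p\<in>d q a. nfa_reach d {p} w)" by blast
  also have "\<dots> = (\<Union>q\<in>S. nfa_reach d (d q a) w)" by (simp only: e)
  also have "\<dots> = (\<Union>q\<in>S. nfa_reach d {q} (a # w))" by simp
  finally show ?case .
qed

lemma nfa_reach_closed:
  assumes "is_nfa Alph A" "S \<subseteq> nstates A" "w \<in> lists Alph"
  shows "nfa_reach (ndelta A) S w \<subseteq> nstates A"
  using assms(2,3)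
proof (induction w arbitrary: S)
  case Nil then show ?case by simp
next
  case (Cons a w)
  have a: "a \<in> Alph" and w: "w \<in> lists Alph" using Cons.prems(2) by auto
  have d: "\<forall>q\<in>nstates A. \<forall>a\<in>Alph. ndelta A q a \<subseteq> nstates A"
    using assms(1) unfolding is_nfa_def by blast
  have "(\<Union>q\<in>S. ndelta A q a) \<subseteq> nstates A"
    using Cons.prems(1) d a by blast
  from Cons.IH[OF this w] show ?case by simp
qed

lemma in_nfa_lang: "w \<in> nfa_lang Alph A \<longleftrightarrow> w \<in> lists Alph \<and> nfa_reach (ndelta A) {ninit A} w \<inter> nfinal A \<noteq> {}"
  unfolding nfa_lang_def by simp

lemma fooling:
  fixes x y :: "'i \<Rightarrow> 'a list"
  assumes B: "is_nfa Alph B" and fin: "finite I"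
    and xy: "\<And>i. i \<in> I \<Longrightarrow> x i @ y i \<in> nfa_lang Alph B"
    and neq: "\<And>i j. i \<in> I \<Longrightarrow> j \<in> I \<Longrightarrow> i \<noteq> j \<Longrightarrow> x i @ y j \<notin> nfa_lang Alph B \<or> x j @ y i \<notin> nfa_lang Alph B"
  shows "card I \<le> card (nstates B)"
proof -
  let ?d = "ndelta B" and ?F = "nfinal B" and ?R = "nfa_reach (ndelta B) {ninit B}"
  have ex: "\<exists>q. q \<in> ?R (x i) \<and> nfa_reach ?d {q} (y i) \<inter> ?F \<noteq> {}" if "i \<in> I" for i
  proof -
    have "nfa_reach ?d (?R (x i)) (y i) \<inter> ?F \<noteq> {}"
      using xy[OF that] by (simp add: in_nfa_lang nfa_reach_append)
    then show ?thesis by (subst (asm) nfa_reach_UN) blast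
  qed
  define q where "q i = (SOME q. q \<in> ?R (x i) \<and> nfa_reach ?d {q} (y i) \<inter> ?F \<noteq> {})" for i
  have q: "q i \<in> ?R (x i) \<and> nfa_reach ?d {q i} (y i) \<inter> ?F \<noteq> {}" if "i \<in> I" for i
    unfolding q_def using someI_ex[OF ex[OF that]] .
  have lists: "x i \<in> lists Alph" "y i \<in> lists Alph" if "i \<in> I" for i
    using xy[OF that] by (auto simp: in_nfa_lang)
  have cross: "x i @ y j \<in> nfa_lang Alph B" if "i \<in> I" "j \<in> I" "q i = q j" for i j
  proof -
    have "nfa_reach ?d {q i} (y j) \<subseteq> nfa_reach ?d (?R (x i)) (y j)"
      using q[OF that(1)] by (subst (2) nfa_reach_UN) blast
    moreover have "nfa_reach ?d {q i} (y j) \<inter> ?F \<noteq> {}"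
      using q[OF that(2)] that(3) by simp
    ultimately have "nfa_reach ?d (?R (x i)) (y j) \<inter> ?F \<noteq> {}"
      by blast
    then show ?thesis using lists that by (simp add: in_nfa_lang nfa_reach_append)
  qed
  have inj: "inj_on q I"
  proof (rule inj_onI, rule ccontr)
    fix i j assume "i \<in> I" "j \<in> I" "q i = q j" "i \<noteq> j"
    then show False using cross[of i j] cross[of j i] neq[of i j] by auto
  qed
  have sub: "q ` I \<subseteq> nstates B"
  proof
    fix p assume "p \<in> q ` I"
    then obtain i where i: "i \<in> I" "p = q i" by blast
    have "?R (x i) \<subseteq> nstates B"
      using nfa_reach_closed[OF B _ lists(1)[OF i(1)]] B by (auto simp: is_nfa_def)
    then show "p \<in> nstates B" using q[OF i(1)] i by blast
  qed
  have "finite (nstates B)" using B by (simp add: is_nfa_def)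
  then show ?thesis using card_inj_on_le[OF inj sub] by simp
qed

lemma dfa_closed: assumes "is_dfa Alph D" "q \<in> dstates D" "w \<in> lists Alph"
  shows "foldl (ddelta D) q w \<in> dstates D"
  using assms(2,3) by (induction w arbitrary: q) (use assms(1) in \<open>auto simp: is_dfa_def\<close>)

lemma reach_in_gen:
  assumes clos: "\<And>S a. S \<in> R \<Longrightarrow> a \<in> Alph \<Longrightarrow> nfa_reach d S [a] \<in> R"
  shows "S \<in> R \<Longrightarrow> u \<in> lists Alph \<Longrightarrow> nfa_reach d S u \<in> R"
proof (induction u arbitrary: S)
  case Nil then show ?case by simp
next
  case (Cons a u)
  have "nfa_reach d S [a] \<in> R" using clos Cons.prems by auto
  then show ?case using Cons.IH Cons.prems by simp
qed

lemma generic: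
  fixes A :: "nat nfa" and Alph :: "nat set" and R :: "nat set set"
  assumes A: "is_nfa Alph A" and st: "nstates A = {..m}"
    and Rsub: "\<forall>S\<in>R. S \<subseteq> {..m}" and finR: "finite R"
    and init: "{ninit A} \<in> R"
    and clos: "\<And>S a. S \<in> R \<Longrightarrow> a \<in> Alph \<Longrightarrow> nfa_reach (ndelta A) S [a] \<in> R"
    and reach: "\<And>S. S \<in> R \<Longrightarrow> \<exists>u\<in>lists Alph. nfa_reach (ndelta A) {ninit A} u = S"
    and test: "\<And>j. j \<le> m \<Longrightarrow> \<exists>z\<in>lists Alph. \<forall>S\<in>R. (nfa_reach (ndelta A) S z \<inter> nfinal A \<noteq> {}) = (j \<in> S)"
    and sing: "\<And>j. j \<le> m \<Longrightarrow> {j} \<in> R"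
  shows "minimal_nfa Alph A \<and> dfa_sc Alph (nfa_lang Alph A) = card R"
proof -
  let ?d = "ndelta A" and ?F = "nfinal A" and ?L = "nfa_lang Alph A"
  let ?R = "nfa_reach (ndelta A) {ninit A}"
  have reach_in: "nfa_reach ?d S u \<in> R" if "S \<in> R" "u \<in> lists Alph" for S u
    using that
  proof (induction u arbitrary: S)
    case Nil then show ?case by simp
  next
    case (Cons a u)
    have "nfa_reach ?d S [a] \<in> R" using clos Cons.prems by auto
    then show ?case using Cons by simp
  qed
  have mem: "u @ z \<in> ?L \<longleftrightarrow> nfa_reach ?d (?R u) z \<inter> ?F \<noteq> {}"
    if "u \<in> lists Alph" "z \<in> lists Alph" for u z
    using that by (simp add: in_nfa_lang nfa_reach_append)
  define x where "x j = (SOME u. u \<in> lists Alph \<and> ?R u = {j})" for j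
  define y where "y j = (SOME z. z \<in> lists Alph \<and> (\<forall>S\<in>R. (nfa_reach ?d S z \<inter> ?F \<noteq> {}) = (j \<in> S)))" for j
  have x: "x j \<in> lists Alph \<and> ?R (x j) = {j}" if "j \<le> m" for j
  proof -
    have "\<exists>u. u \<in> lists Alph \<and> ?R u = {j}" using reach[OF sing[OF that]] by blast
    then show ?thesis unfolding x_def by (rule someI_ex)
  qed
  have y: "y j \<in> lists Alph \<and> (\<forall>S\<in>R. (nfa_reach ?d S (y j) \<inter> ?F \<noteq> {}) = (j \<in> S))" if "j \<le> m" for j
  proof -
    have "\<exists>z. z \<in> lists Alph \<and> (\<forall>S\<in>R. (nfa_reach ?d S z \<inter> ?F \<noteq> {}) = (j \<in> S))"
      using test[OF that] by blast
    then show ?thesis unfolding y_def by (rule someI_ex)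
  qed
  have xy: "x i @ y j \<in> ?L \<longleftrightarrow> i = j" if "i \<le> m" "j \<le> m" for i j
  proof -
    have "x i @ y j \<in> ?L \<longleftrightarrow> nfa_reach ?d (?R (x i)) (y j) \<inter> ?F \<noteq> {}"
      using mem[OF conjunct1[OF x[OF that(1)]] conjunct1[OF y[OF that(2)]]] .
    also have "\<dots> \<longleftrightarrow> nfa_reach ?d {i} (y j) \<inter> ?F \<noteq> {}" using x[OF that(1)] by simp
    also have "\<dots> \<longleftrightarrow> j \<in> {i}" using conjunct2[OF y[OF that(2)]] sing[OF that(1)] by (rule bspec)
    finally show ?thesis by auto
  qed
  have minimal: "minimal_nfa Alph A"
    unfolding minimal_nfa_def
  proof (intro conjI allI impI A)
    fix B assume B: "is_nfa Alph B \<and> nfa_lang Alph B = nfa_lang Alph A"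
    have "card {..m} \<le> card (nstates B)"
    proof (rule fooling[where x=x and y=y])
      show "is_nfa Alph B" using B by simp
      show "finite {..m}" by simp
      show "x i @ y i \<in> nfa_lang Alph B" if "i \<in> {..m}" for i
        using xy[of i i] that B by simp
      show "x i @ y j \<notin> nfa_lang Alph B \<or> x j @ y i \<notin> nfa_lang Alph B"
        if "i \<in> {..m}" "j \<in> {..m}" "i \<noteq> j" for i j
        using xy[of i j] that B by simp
    qed
    then show "card (nstates A) \<le> card (nstates B)" using st by simp
  qed
  obtain h where h: "bij_betw h R {0..<card R}" using ex_bij_betw_finite_nat[OF finR] by blast
  let ?hi = "inv_into R h"
  define D where "D = \<lparr>dstates = {0..<card R}, dinit = h {ninit A},
      ddelta = (\<lambda>q a. h (nfa_reach ?d (?hi q) [a])), dfinal = h ` {S\<in>R. S \<inter> ?F \<noteq> {}}\<rparr>"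
  have hi: "?hi q \<in> R" if "q \<in> {0..<card R}" for q
    using h that by (metis bij_betw_def inv_into_into)
  have hih: "?hi (h S) = S" if "S \<in> R" for S
    using h that by (simp add: bij_betw_def inv_into_f_f)
  have hR: "h S \<in> {0..<card R}" if "S \<in> R" for S
    using h that bij_betwE by blast
  have Ddfa: "is_dfa Alph D"
  proof -
    have "h ` {S\<in>R. S \<inter> ?F \<noteq> {}} \<subseteq> {0..<card R}" using hR by blast
    moreover have "h (nfa_reach ?d (?hi q) [a]) \<in> {0..<card R}" if "q \<in> {0..<card R}" "a \<in> Alph" for q a
      using hR[OF clos[OF hi[OF that(1)] that(2)]] .
    ultimately show ?thesis unfolding is_dfa_def D_def using hR[OF init] by simp
  qed
  have run: "foldl (ddelta D) (h S) w = h (nfa_reach ?d S w)" if "S \<in> R" "w \<in> lists Alph" for S w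
    using that
  proof (induction w arbitrary: S)
    case Nil then show ?case by simp
  next
    case (Cons a w)
    have "ddelta D (h S) a = h (nfa_reach ?d S [a])" unfolding D_def using hih Cons.prems by simp
    moreover have "nfa_reach ?d S [a] \<in> R" using clos Cons.prems by auto
    ultimately show ?case using Cons by simp
  qed
  have Dlang: "dfa_lang Alph D = ?L"
  proof (intro set_eqI iffI)
    fix w assume w0: "w \<in> dfa_lang Alph D"
    have w1: "w \<in> lists Alph" using w0 unfolding dfa_lang_def by simp
    have "foldl (ddelta D) (dinit D) w \<in> dfinal D" using w0 unfolding dfa_lang_def by simp
    moreover have "dinit D = h {ninit A}" "dfinal D = h ` {S\<in>R. S \<inter> ?F \<noteq> {}}" by (simp_all add: D_def)
    ultimately have "h (?R w) \<in> h ` {S\<in>R. S \<inter> ?F \<noteq> {}}" using run[OF init w1] by simp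
    then obtain S where S: "S \<in> R" "S \<inter> ?F \<noteq> {}" "h (?R w) = h S" by blast
    have "?R w = S" using inj_onD[OF bij_betw_imp_inj_on[OF h] S(3) reach_in[OF init w1] S(1)] .
    then have w: "w \<in> lists Alph" "?R w \<inter> ?F \<noteq> {}" using S w1 by auto
    then show "w \<in> ?L" using w by (simp add: in_nfa_lang)
  next
    fix w assume "w \<in> ?L"
    then have w: "w \<in> lists Alph" "?R w \<inter> ?F \<noteq> {}" by (auto simp: in_nfa_lang)
    then show "w \<in> dfa_lang Alph D"
      unfolding dfa_lang_def using run[OF init w(1)] reach_in[OF init w(1)] by (auto simp: D_def)
  qed
  have cardD: "card (dstates D) = card R" by (simp add: D_def)
  have lower: "card R \<le> card (dstates E)" if E: "is_dfa Alph E" "dfa_lang Alph E = ?L" for E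
  proof -
    define u where "u S = (SOME u. u \<in> lists Alph \<and> ?R u = S)" for S
    have u: "u S \<in> lists Alph \<and> ?R (u S) = S" if "S \<in> R" for S
    proof -
      have "\<exists>u. u \<in> lists Alph \<and> ?R u = S" using reach[OF that] by blast
      then show ?thesis unfolding u_def by (rule someI_ex)
    qed
    let ?f = "\<lambda>S. foldl (ddelta E) (dinit E) (u S)"
    have inj: "inj_on ?f R"
    proof (rule inj_onI, rule ccontr)
      fix S T assume S: "S \<in> R" and T: "T \<in> R" and eq: "?f S = ?f T" and ne: "S \<noteq> T"
      obtain j where j: "j \<le> m" "(j \<in> S) \<noteq> (j \<in> T)"
        using Rsub S T ne by blast
      have yj: "y j \<in> lists Alph" using y[OF j(1)] by simp
      have s1: "(u S @ y j \<in> ?L) = (j \<in> S)"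
        using mem[OF conjunct1[OF u[OF S]] yj] conjunct2[OF u[OF S]] conjunct2[OF y[OF j(1)]] S by simp
      have s2: "(u T @ y j \<in> ?L) = (j \<in> T)"
        using mem[OF conjunct1[OF u[OF T]] yj] conjunct2[OF u[OF T]] conjunct2[OF y[OF j(1)]] T by simp
      moreover have "(u S @ y j \<in> ?L) = (u T @ y j \<in> ?L)"
        using E(2)[symmetric] eq u[OF S] u[OF T] y[OF j(1)] by (simp add: dfa_lang_def)
      ultimately show False using j s1 s2 by simp
    qed
    have sub: "?f ` R \<subseteq> dstates E"
      using dfa_closed[OF E(1)] E(1) u by (auto simp: is_dfa_def)
    have "finite (dstates E)" using E(1) by (simp add: is_dfa_def)
    then show ?thesis using card_inj_on_le[OF inj sub] by simp
  qed
  have "dfa_sc Alph ?L = card R"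
    unfolding dfa_sc_def
    by (rule Least_equality) (use Ddfa cardD Dlang lower in auto)
  with minimal show ?thesis by simp
qed

lemma family:
  assumes U: "finite U" and r1: "card U \<le> r" and r2: "r \<le> 2 ^ card U - 1"
  shows "\<exists>F. (\<lambda>i. {i}) ` U \<subseteq> F \<and> F \<subseteq> Pow U - {{}} \<and> card F = r \<and> finite F"
proof -
  let ?Sg = "(\<lambda>i. {i}) ` U"
  let ?P = "Pow U - {{}} - ?Sg"
  have cSg: "card ?Sg = card U" by (rule card_image) (simp add: inj_on_def)
  have SgP: "?Sg \<subseteq> Pow U - {{}}" by auto
  have c1: "card (Pow U - {{}}) = 2 ^ card U - 1"
    using U by (simp add: card_Pow)
  have fin: "finite (Pow U - {{}})" using U by simp
  have "card ?P = 2 ^ card U - 1 - card U"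
    using card_Diff_subset[OF finite_subset[OF SgP fin] SgP] c1 cSg by simp
  then have "r - card U \<le> card ?P" using r2 by simp
  then obtain Q where Q: "Q \<subseteq> ?P" "card Q = r - card U" "finite Q"
    by (rule obtain_subset_with_card_n)
  have d: "?Sg \<inter> Q = {}" using Q(1) by blast
  have "card (?Sg \<union> Q) = card ?Sg + card Q"
    by (rule card_Un_disjoint) (use U Q d in auto)
  then have "card (?Sg \<union> Q) = r" using cSg Q(2) r1 by simp
  moreover have "?Sg \<union> Q \<subseteq> Pow U - {{}}" using Q(1) SgP by blast
  moreover have "finite (?Sg \<union> Q)" using U Q by simp
  ultimately show ?thesis by blast
qed

definition pA :: "nat \<Rightarrow> nat \<Rightarrow> (nat \<Rightarrow> nat set) \<Rightarrow> nat nfa" where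
  "pA m r g = \<lparr>nstates = {..m}, ninit = 0,
     ndelta = (\<lambda>q a. if q = 0 \<and> m \<le> a \<and> a < m + r then g (a - m) else if q < m \<and> a = q then {m} else {}),
     nfinal = {m}\<rparr>"

lemma pA_step:
  assumes "1 \<le> m" "a < m + r"
  shows "nfa_reach (ndelta (pA m r g)) S [a] =
     (if m \<le> a then (if 0 \<in> S then g (a - m) else {}) else if a \<in> S then {m} else {})"
  using assms by (auto simp: pA_def split: if_splits)

lemma prefix_case:
  fixes m r :: nat and g :: "nat \<Rightarrow> nat set" and F :: "nat set set"
  assumes m: "1 \<le> m" and g: "bij_betw g {..<r} F" and Fsub: "F \<subseteq> Pow {..<m} - {{}}"
    and Fsing: "(\<lambda>i. {i}) ` {..<m} \<subseteq> F" and finF: "finite F"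
  shows "minimal_nfa {..<m+r} (pA m r g) \<and> card (nstates (pA m r g)) = m + 1 \<and>
     prefix_free (nfa_lang {..<m+r} (pA m r g)) \<and> dfa_sc {..<m+r} (nfa_lang {..<m+r} (pA m r g)) = r + 2"
proof -
  let ?A = "pA m r g" and ?Al = "{..<m+r}" and ?R = "F \<union> {{m}, {}}"
  let ?d = "ndelta ?A"
  have gF: "g k \<in> F" if "k < r" for k using g that bij_betwE by blast
  have gsub: "g k \<subseteq> {..<m}" if "k < r" for k using gF[OF that] Fsub by blast
  have Fsub': "S \<subseteq> {..<m}" "S \<noteq> {}" if "S \<in> F" for S using Fsub that by auto
  have gsub2: "g (a - m) \<subseteq> {..m}" if "m \<le> a" "a < m + r" for a
    using gsub[of "a - m"] that by force
  have isA: "is_nfa ?Al ?A"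
    unfolding is_nfa_def using gsub2 by (auto simp: pA_def)
  have st: "nstates ?A = {..m}" and ini: "ninit ?A = 0" and fin: "nfinal ?A = {m}"
    by (simp_all add: pA_def)
  have step: "nfa_reach ?d S [a] =
     (if m \<le> a then (if 0 \<in> S then g (a - m) else {}) else if a \<in> S then {m} else {})"
    if "a < m + r" for S a using pA_step[OF m that] .
  have mF: "{m} \<notin> F" "{} \<notin> F" using Fsub' by auto
  have cardR: "card ?R = r + 2"
  proof -
    have "card F = r" using bij_betw_same_card[OF g] by simp
    then show ?thesis using mF finF by simp
  qed
  have sing: "{j} \<in> ?R" if "j \<le> m" for j
  proof (cases "j = m")
    case False then have "j < m" using that by simp
    then show ?thesis using Fsing by blast
  qed simp
  have clos: "nfa_reach ?d S [a] \<in> ?R" if "S \<in> ?R" "a \<in> ?Al" for S a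
  proof -
    have a: "a < m + r" using that by simp
    show ?thesis
    proof (cases "m \<le> a")
      case True
      then have "a - m < r" using a by simp
      then show ?thesis using step[OF a] True gF by auto
    qed (use step[OF a] in auto)
  qed
  have gk: "\<exists>k<r. g k = S" if "S \<in> F" for S
    using g that unfolding bij_betw_def by auto
  have reach: "\<exists>u\<in>lists ?Al. nfa_reach ?d {ninit ?A} u = S" if S: "S \<in> ?R" for S
  proof -
    have e0: "nfa_reach ?d {0} [0] = {m}" using m by (simp add: pA_def)
    consider "S \<in> F" | "S = {m}" | "S = {}" using S by blast
    then show ?thesis
    proof cases
      case 1
      then obtain k where k: "k < r" "g k = S" using gk by blast
      have "m + k < m + r" using k by simp
      then have "nfa_reach ?d {0} [m + k] = S" using k by (simp add: pA_def)
      moreover have "[m + k] \<in> lists ?Al" using k by simp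
      ultimately show ?thesis unfolding ini by blast
    next
      case 2
      moreover have "[0] \<in> lists ?Al" using m by simp
      ultimately show ?thesis using e0 unfolding ini by blast
    next
      case 3
      have "nfa_reach ?d {0} [0, 0] = nfa_reach ?d (nfa_reach ?d {0} [0]) [0]"
        by (simp add: nfa_reach_append[symmetric])
      also have "\<dots> = {}" using e0 m by (simp add: pA_def)
      finally have "nfa_reach ?d {0} [0, 0] = {}" .
      moreover have "[0, 0] \<in> lists ?Al" using m by simp
      ultimately show ?thesis using 3 unfolding ini by blast
    qed
  qed
  have test: "\<exists>z\<in>lists ?Al. \<forall>S\<in>?R. (nfa_reach ?d S z \<inter> nfinal ?A \<noteq> {}) = (j \<in> S)"
    if "j \<le> m" for j
  proof (cases "j = m")
    case True
    then show ?thesis unfolding fin by (intro bexI[of _ "[]"]) auto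
  next
    case False
    then have j: "j < m" using that by simp
    then have ja: "j < m + r" by simp
    have "\<forall>S\<in>?R. (nfa_reach ?d S [j] \<inter> nfinal ?A \<noteq> {}) = (j \<in> S)"
      using step[OF ja] j unfolding fin by auto
    moreover have "[j] \<in> lists ?Al" using ja by simp
    ultimately show ?thesis by blast
  qed
  have Rsub: "\<forall>S\<in>?R. S \<subseteq> {..m}"
  proof
    fix S assume S: "S \<in> ?R"
    have lm: "{..<m} \<subseteq> {..m}" by auto
    show "S \<subseteq> {..m}"
    proof (cases "S \<in> F")
      case True show ?thesis using order_trans[OF Fsub'(1)[OF True] lm] .
    next
      case False then show ?thesis using S by auto
    qed
  qed
  have finR: "finite ?R" using finF by simp
  have init: "{ninit ?A} \<in> ?R" using sing[of 0] unfolding ini by simp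
  have gen: "minimal_nfa ?Al ?A \<and> dfa_sc ?Al (nfa_lang ?Al ?A) = card ?R"
    by (rule generic[OF isA st Rsub finR init clos reach test sing])
  have pf: "prefix_free (nfa_lang ?Al ?A)"
    unfolding prefix_free_def
  proof (intro ballI allI impI)
    fix y z :: "nat list" assume y: "y \<in> nfa_lang ?Al ?A" and z: "z \<noteq> []"
    have yl: "y \<in> lists ?Al" and ya: "nfa_reach ?d {0} y \<inter> {m} \<noteq> {}"
      using y by (auto simp: in_nfa_lang ini fin)
    have i0: "{0} \<in> ?R" using init unfolding ini .
    have yR: "nfa_reach ?d {0} y \<in> ?R"
      by (rule reach_in_gen[of ?R ?Al ?d, OF clos i0 yl])
    have ry: "nfa_reach ?d {0} y = {m}"
    proof (cases "nfa_reach ?d {0} y \<in> F")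
      case True
      then have "nfa_reach ?d {0} y \<subseteq> {..<m}" by (rule Fsub')
      then have "nfa_reach ?d {0} y \<inter> {m} = {}" by auto
      then show ?thesis using ya by contradiction
    next
      case False then show ?thesis using yR ya by auto
    qed
    obtain a z' where az: "z = a # z'" using z by (cases z) auto
    have "?d m a = {}" using m by (simp add: pA_def)
    then have "nfa_reach ?d {0} (y @ z) = {}"
      by (simp add: nfa_reach_append ry az)
    then show "y @ z \<notin> nfa_lang ?Al ?A" by (simp add: in_nfa_lang ini)
  qed
  show ?thesis using gen pf cardR st by simp
qed

lemma avoid_state:
  assumes "\<And>q a. x \<notin> d q a"
  shows "w \<noteq> [] \<Longrightarrow> x \<notin> nfa_reach d S w"
proof (induction w arbitrary: S)
  case Nil then show ?case by simp
next
  case (Cons a w)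
  show ?case
  proof (cases "w = []")
    case True then show ?thesis using assms by simp
  next
    case False
    have "x \<notin> nfa_reach d (\<Union>q\<in>S. d q a) w" using Cons.IH[OF False] .
    then show ?thesis by simp
  qed
qed

definition sA :: "nat \<Rightarrow> nat \<Rightarrow> (nat \<Rightarrow> nat set) \<Rightarrow> nat nfa" where
  "sA m r g = \<lparr>nstates = {..m}, ninit = 0,
     ndelta = (\<lambda>q a. if q = 0 \<and> m \<le> a \<and> a < m + r then g (a - m) else if 0 < q \<and> q < m \<and> a = q then {m} else {}),
     nfinal = {m}\<rparr>"

lemma sA_step:
  assumes "1 \<le> m" "a < m + r"
  shows "nfa_reach (ndelta (sA m r g)) S [a] =
     (if m \<le> a then (if 0 \<in> S then g (a - m) else {}) else if 0 < a \<and> a \<in> S then {m} else {})"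
  using assms by (auto simp: sA_def split: if_splits)

lemma suffix_case:
  fixes m r :: nat and g :: "nat \<Rightarrow> nat set" and F :: "nat set set"
  assumes m: "1 \<le> m" and g: "bij_betw g {..<r} F" and Fsub: "F \<subseteq> Pow {1..m} - {{}}"
    and Fsing: "(\<lambda>i. {i}) ` {1..m} \<subseteq> F" and finF: "finite F"
  shows "minimal_nfa {..<m+r} (sA m r g) \<and> card (nstates (sA m r g)) = m + 1 \<and>
     suffix_free (nfa_lang {..<m+r} (sA m r g)) \<and> dfa_sc {..<m+r} (nfa_lang {..<m+r} (sA m r g)) = r + 2"
proof -
  let ?A = "sA m r g" and ?Al = "{..<m+r}" and ?R = "F \<union> {{0}, {}}"
  let ?d = "ndelta ?A"
  have gF: "g k \<in> F" if "k < r" for k using g that bij_betwE by blast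
  have gsub: "g k \<subseteq> {1..m}" if "k < r" for k using gF[OF that] Fsub by blast
  have Fsub': "S \<subseteq> {1..m}" "S \<noteq> {}" if "S \<in> F" for S using Fsub that by auto
  have gsub2: "g (a - m) \<subseteq> {..m}" if "m \<le> a" "a < m + r" for a
    using gsub[of "a - m"] that by force
  have isA: "is_nfa ?Al ?A"
    unfolding is_nfa_def using gsub2 by (auto simp: sA_def)
  have st: "nstates ?A = {..m}" and ini: "ninit ?A = 0" and fin: "nfinal ?A = {m}"
    by (simp_all add: sA_def)
  have step: "nfa_reach ?d S [a] =
     (if m \<le> a then (if 0 \<in> S then g (a - m) else {}) else if 0 < a \<and> a \<in> S then {m} else {})"
    if "a < m + r" for S a using sA_step[OF m that] .
  have mF: "{0} \<notin> F" "{} \<notin> F" using Fsub' by force+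
  have cardR: "card ?R = r + 2"
  proof -
    have "card F = r" using bij_betw_same_card[OF g] by simp
    then show ?thesis using mF finF by simp
  qed
  have sing: "{j} \<in> ?R" if "j \<le> m" for j
  proof (cases "j = 0")
    case False then have "j \<in> {1..m}" using that by simp
    then show ?thesis using Fsing by blast
  qed simp
  have clos: "nfa_reach ?d S [a] \<in> ?R" if "S \<in> ?R" "a \<in> ?Al" for S a
  proof -
    have a: "a < m + r" using that by simp
    show ?thesis
    proof (cases "m \<le> a")
      case True
      then have "a - m < r" using a by simp
      then show ?thesis using step[OF a] True gF by auto
    next
      case False
      have "{m} \<in> F" using Fsing m by auto
      then show ?thesis using step[OF a] False by auto
    qed
  qed
  have gk: "\<exists>k<r. g k = S" if "S \<in> F" for S
    using g that unfolding bij_betw_def by auto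
  have reach: "\<exists>u\<in>lists ?Al. nfa_reach ?d {ninit ?A} u = S" if S: "S \<in> ?R" for S
  proof -
    consider "S \<in> F" | "S = {0}" | "S = {}" using S by blast
    then show ?thesis
    proof cases
      case 1
      then obtain k where k: "k < r" "g k = S" using gk by blast
      have "m + k < m + r" using k by simp
      then have "nfa_reach ?d {0} [m + k] = S" using k by (simp add: sA_def)
      moreover have "[m + k] \<in> lists ?Al" using k by simp
      ultimately show ?thesis unfolding ini by blast
    next
      case 2
      then show ?thesis unfolding ini by (intro bexI[of _ "[]"]) auto
    next
      case 3
      have "nfa_reach ?d {0} [0] = {}" using m by (simp add: sA_def)
      moreover have "[0] \<in> lists ?Al" using m by simp
      ultimately show ?thesis using 3 unfolding ini by blast
    qed
  qed
  have "{m} \<in> F" using Fsing m by auto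
  then obtain kf where kf: "kf < r" "g kf = {m}" using gk by blast
  have test: "\<exists>z\<in>lists ?Al. \<forall>S\<in>?R. (nfa_reach ?d S z \<inter> nfinal ?A \<noteq> {}) = (j \<in> S)"
    if jm: "j \<le> m" for j
  proof -
    consider "j = m" | "j = 0" | "0 < j" "j < m" using jm m by linarith
    then show ?thesis
    proof cases
      case 1
      then show ?thesis unfolding fin by (intro bexI[of _ "[]"]) auto
    next
      case 2
      have ja: "m + kf < m + r" using kf by simp
      have "\<forall>S\<in>?R. (nfa_reach ?d S [m + kf] \<inter> nfinal ?A \<noteq> {}) = (j \<in> S)"
        using step[OF ja] kf 2 unfolding fin by auto
      moreover have "[m + kf] \<in> lists ?Al" using ja by simp
      ultimately show ?thesis by blast
    next
      case 3
      then have ja: "j < m + r" by simp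
      have "\<forall>S\<in>?R. (nfa_reach ?d S [j] \<inter> nfinal ?A \<noteq> {}) = (j \<in> S)"
        using step[OF ja] 3 unfolding fin by auto
      moreover have "[j] \<in> lists ?Al" using ja by simp
      ultimately show ?thesis by blast
    qed
  qed
  have Rsub: "\<forall>S\<in>?R. S \<subseteq> {..m}"
  proof
    fix S assume S: "S \<in> ?R"
    have lm: "{1..m} \<subseteq> {..m}" by auto
    show "S \<subseteq> {..m}"
    proof (cases "S \<in> F")
      case True show ?thesis using order_trans[OF Fsub'(1)[OF True] lm] .
    next
      case False then show ?thesis using S by auto
    qed
  qed
  have finR: "finite ?R" using finF by simp
  have init: "{ninit ?A} \<in> ?R" unfolding ini by simp
  have gen: "minimal_nfa ?Al ?A \<and> dfa_sc ?Al (nfa_lang ?Al ?A) = card ?R"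
    by (rule generic[OF isA st Rsub finR init clos reach test sing])
  have no0: "0 \<notin> ?d q a" for q a
  proof (cases "q = 0 \<and> m \<le> a \<and> a < m + r")
    case True
    then have "a - m < r" by arith
    then have "0 \<notin> g (a - m)" using gsub[of "a - m"] by auto
    then show ?thesis using True by (simp add: sA_def)
  next
    case False then show ?thesis using m by (auto simp: sA_def)
  qed
  have split1: "nfa_reach ?d S (b # w) = nfa_reach ?d (nfa_reach ?d S [b]) w" for S b w
    using nfa_reach_append[of ?d S "[b]" w] by simp
  have sf: "suffix_free (nfa_lang ?Al ?A)"
    unfolding suffix_free_def
  proof (intro ballI allI impI)
    fix y x :: "nat list" assume y: "y \<in> nfa_lang ?Al ?A" and x: "x \<noteq> []"
    show "x @ y \<notin> nfa_lang ?Al ?A"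
    proof
      assume xy: "x @ y \<in> nfa_lang ?Al ?A"
      have yl: "y \<in> lists ?Al" and ya: "nfa_reach ?d {0} y \<inter> {m} \<noteq> {}"
        using y by (auto simp: in_nfa_lang ini fin)
      have xl: "x \<in> lists ?Al" and xya: "nfa_reach ?d {0} (x @ y) \<inter> {m} \<noteq> {}"
        using xy by (auto simp: in_nfa_lang ini fin)
      have T0: "0 \<notin> nfa_reach ?d {0} x" by (rule avoid_state[OF no0 x])
      have "y \<noteq> []" using ya m by auto
      then obtain b y' where by': "y = b # y'" by (cases y) auto
      have b: "b < m + r" using yl by' by simp
      have "nfa_reach ?d {0} [b] \<noteq> {}"
      proof
        assume "nfa_reach ?d {0} [b] = {}"
        then show False using ya split1[of "{0}" b y'] by' by simp
      qed
      then have mb: "m \<le> b" using step[OF b, of "{0}"] by (auto split: if_splits)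
      have "nfa_reach ?d (nfa_reach ?d {0} x) [b] = {}"
        using step[OF b, of "nfa_reach ?d {0} x"] mb T0 by simp
      then have "nfa_reach ?d {0} (x @ y) = {}"
        using nfa_reach_append[of ?d "{0}" x y] split1[of "nfa_reach ?d {0} x" b y'] by' by simp
      then show False using xya by simp
    qed
  qed
  show ?thesis using gen sf cardR st by simp
qed

definition oneA :: "nat nfa" where
  "oneA = \<lparr>nstates = {..0}, ninit = 0, ndelta = (\<lambda>q a. {}), nfinal = {0}\<rparr>"

lemma one_case:
  "minimal_nfa {0} oneA \<and> card (nstates oneA) = 1 \<and> prefix_free (nfa_lang {0} oneA) \<and>
   suffix_free (nfa_lang {0} oneA) \<and> dfa_sc {0} (nfa_lang {0} oneA) = 2"
proof -
  let ?R = "{{0::nat}, {}}" and ?d = "ndelta oneA"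
  have d: "?d = (\<lambda>q a. {})" by (simp add: oneA_def)
  have isA: "is_nfa {0} oneA" by (simp add: is_nfa_def oneA_def)
  have st: "nstates oneA = {..0}" by (simp add: oneA_def)
  have ini: "ninit oneA = 0" and fin: "nfinal oneA = {0}" by (simp_all add: oneA_def)
  have gen: "minimal_nfa {0} oneA \<and> dfa_sc {0} (nfa_lang {0} oneA) = card ?R"
  proof (rule generic[OF isA st])
    show "\<forall>S\<in>?R. S \<subseteq> {..0}" by auto
    show "finite ?R" by simp
    show "{ninit oneA} \<in> ?R" by (simp add: ini)
    show "nfa_reach ?d S [a] \<in> ?R" for S a by (simp add: d)
    show "\<exists>u\<in>lists {0}. nfa_reach ?d {ninit oneA} u = S" if "S \<in> ?R" for S
    proof -
      have "nfa_reach ?d {0} [] = {0}" "nfa_reach ?d {0} [0] = {}" by (simp_all add: d)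
      moreover have "[] \<in> lists {0::nat}" "[0] \<in> lists {0::nat}" by simp_all
      ultimately show ?thesis using that unfolding ini by blast
    qed
    show "\<exists>z\<in>lists {0}. \<forall>S\<in>?R. (nfa_reach ?d S z \<inter> nfinal oneA \<noteq> {}) = (j \<in> S)"
      if "j \<le> 0" for j
      using that unfolding fin by (intro bexI[of _ "[]"]) auto
    show "{j} \<in> ?R" if "j \<le> 0" for j using that by simp
  qed
  have L: "w = []" if "w \<in> nfa_lang {0} oneA" for w
  proof (rule ccontr)
    assume "w \<noteq> []"
    then obtain a w' where "w = a # w'" by (cases w) auto
    then have "nfa_reach ?d {0} w = {}" by (simp add: d)
    then show False using that by (simp add: in_nfa_lang ini)
  qed
  have pf: "prefix_free (nfa_lang {0} oneA)"
    unfolding prefix_free_def using L by blast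
  have sf: "suffix_free (nfa_lang {0} oneA)"
    unfolding suffix_free_def using L by blast
  have "card ?R = 2" by simp
  then show ?thesis using gen pf sf st by simp
qed

theorem mainTheorem5:
  fixes n \<alpha> :: nat
  assumes "1 \<le> n" and "n < \<alpha>" and "\<alpha> \<le> 2 ^ (n - 1) + 1"
  shows "(\<exists>(Alph :: nat set) A. finite Alph \<and> minimal_nfa Alph A \<and> card (nstates A) = n \<and>
            prefix_free (nfa_lang Alph A) \<and> dfa_sc Alph (nfa_lang Alph A) = \<alpha>)
       \<and> (\<exists>(Alph :: nat set) A. finite Alph \<and> minimal_nfa Alph A \<and> card (nstates A) = n \<and>
            suffix_free (nfa_lang Alph A) \<and> dfa_sc Alph (nfa_lang Alph A) = \<alpha>)"
proof (cases "n = 1")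
  case True
  then have a: "\<alpha> = 2" using assms by simp
  have fin: "finite {0::nat}" by simp
  have P: "finite {0::nat} \<and> minimal_nfa {0} oneA \<and> card (nstates oneA) = n \<and>
     prefix_free (nfa_lang {0} oneA) \<and> dfa_sc {0} (nfa_lang {0} oneA) = \<alpha>"
    using one_case a True fin by simp
  have S: "finite {0::nat} \<and> minimal_nfa {0} oneA \<and> card (nstates oneA) = n \<and>
     suffix_free (nfa_lang {0} oneA) \<and> dfa_sc {0} (nfa_lang {0} oneA) = \<alpha>"
    using one_case a True fin by simp
  show ?thesis using P S by blast
next
  case False
  define m where "m = n - 1"
  define r where "r = \<alpha> - 2"
  have m: "1 \<le> m" and nm: "n = m + 1" using False assms(1) by (simp_all add: m_def)
  have ar: "\<alpha> = r + 2" using assms(2) nm by (simp add: r_def)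
  have r1: "m \<le> r" using assms(2) nm ar by simp
  have r2: "r \<le> 2 ^ m - 1" using assms(3) ar nm by simp
  have finAl: "finite {..<m + r}" by simp
  obtain F1 where F1: "(\<lambda>i. {i}) ` {..<m} \<subseteq> F1" "F1 \<subseteq> Pow {..<m} - {{}}" "card F1 = r" "finite F1"
    using family[of "{..<m}" r] r1 r2 by auto
  obtain g1 where g1: "bij_betw g1 {0..<card F1} F1" using ex_bij_betw_nat_finite[OF F1(4)] by blast
  have g1': "bij_betw g1 {..<r} F1" using g1 F1(3) by (simp add: atLeast0LessThan)
  have P: "minimal_nfa {..<m+r} (pA m r g1) \<and> card (nstates (pA m r g1)) = m + 1 \<and>
     prefix_free (nfa_lang {..<m+r} (pA m r g1)) \<and> dfa_sc {..<m+r} (nfa_lang {..<m+r} (pA m r g1)) = r + 2"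
    by (rule prefix_case[OF m g1' F1(2) F1(1) F1(4)])
  have cU: "card {1..m} = m" by simp
  obtain F2 where F2: "(\<lambda>i. {i}) ` {1..m} \<subseteq> F2" "F2 \<subseteq> Pow {1..m} - {{}}" "card F2 = r" "finite F2"
    using family[of "{1..m}" r] r1 r2 cU by auto
  obtain g2 where g2: "bij_betw g2 {0..<card F2} F2" using ex_bij_betw_nat_finite[OF F2(4)] by blast
  have g2': "bij_betw g2 {..<r} F2" using g2 F2(3) by (simp add: atLeast0LessThan)
  have S: "minimal_nfa {..<m+r} (sA m r g2) \<and> card (nstates (sA m r g2)) = m + 1 \<and>
     suffix_free (nfa_lang {..<m+r} (sA m r g2)) \<and> dfa_sc {..<m+r} (nfa_lang {..<m+r} (sA m r g2)) = r + 2"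
    by (rule suffix_case[OF m g2' F2(2) F2(1) F2(4)])
  show ?thesis
  proof
    show "\<exists>(Alph :: nat set) A. finite Alph \<and> minimal_nfa Alph A \<and> card (nstates A) = n \<and>
            prefix_free (nfa_lang Alph A) \<and> dfa_sc Alph (nfa_lang Alph A) = \<alpha>"
      using P finAl nm ar by blast
    show "\<exists>(Alph :: nat set) A. finite Alph \<and> minimal_nfa Alph A \<and> card (nstates A) = n \<and>
            suffix_free (nfa_lang Alph A) \<and> dfa_sc Alph (nfa_lang Alph A) = \<alpha>"
      using S finAl nm ar by blast
  qed
qed

end
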